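(* Let $(\psi,p,A)$ be a regular normal extremal containing an interior three-bang block $X(\tau_X)\,Y(\ell)\,X(\tau_X)$, i.e. three consecutive arcs, an $X$-arc of length $\tau_X=\pi/\sin\gamma$, a $Y$-arc of length $\ell\in(0,2\pi)$, and an $X$-arc of length $\tau_X$, whose initial and final times are both switching times. If the reduced data at the initial time of the block are $(0,a,b)$ with $a\neq0$, then the reduced data at its final time are $(0,-a,b)$, i.e. the same as those produced by a single switching-to-switching $Y$-arc started from $(0,a,b)$, while the block has total length $2\pi/\sin\gamma+\ell$, strictly larger than the length (in $(0,2\pi)$) of that $Y$-arc. Consequently, such an interior $XYX$ block cannot occur on a regular normal time-optimal extremal.
   Context: Fix $\gamma\in(0,\pi/2)$, $s=\sin\gamma$, $c=\cos\gamma$, and $X=\begin{pmatrix}0&s^2&sc\\-s^2&0&0\\-sc&0&0\end{pmatrix}$, $Y=\begin{pmatrix}0&1&0\\-1&0&0\\0&0&0\end{pmatrix}$ on $\mathbb R^3$ with standard basis $e_1,e_2,e_3$ and standard inner product. Let $\Sigma=\{\psi:\langle e_3,\psi\rangle=0\}$, $\psi_0=(0,s,c)^\top$. Time-optimal problem: over piecewise constant controls $A:[0,T]\to\{X,Y\}$ with finitely many discontinuities (switching times) and trajectories $\dot\psi=A(t)\psi$, $\psi(0)=\psi_0$, minimize $T$ subject to $\psi(T)\in\Sigma$. Maximal intervals on which $A\equiv X$ (resp. $Y$) are $X$-arcs (resp. $Y$-arcs), also called bangs. A normal extremal is such a trajectory with a nonzero absolutely continuous costate $p$ satisfying $\dot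 p=-A(t)^\top p$ and, for a.e. $t$, $\langle p,A(t)\psi\rangle-1=\max_{B\in\{X,Y\}}(\langle p,B\psi\rangle-1)$. Let $F_1=X-Y$, $F_2=[X,Y]$, $F_3=[Y,[X,Y]]$, and reduced data $(\phi_1,\phi_2,\phi_3)$ with $\phi_i=\langle p,F_i\psi\rangle$; the switching function is $\Phi=\phi_1$. A normal extremal is regular (bang–bang) if $\Phi$ vanishes only at isolated times and at every switching time $\phi_1=0$ and $\phi_2\neq 0$. Time-optimal means the trajectory solves the minimization problem. *)

theory Defs
  imports "HOL-Analysis.Analysis"
begin

definition Xm :: "real \<Rightarrow> real^3^3" where
  "Xm \<gamma> = (let s = sin \<gamma>; c = cos \<gamma> in
     vector [vector [0, s^2, s*c], vector [- (s^2), 0, 0], vector [- (s*c), 0, 0]])"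

definition Ym :: "real^3^3" where
  "Ym = vector [vector [0, 1, 0], vector [-1, 0, 0], vector [0, 0, 0]]"

definition psi0 :: "real \<Rightarrow> real^3" where
  "psi0 \<gamma> = vector [0, sin \<gamma>, cos \<gamma>]"

definition in_Sigma :: "real^3 \<Rightarrow> bool" where
  "in_Sigma \<psi> \<longleftrightarrow> inner (axis 3 1) \<psi> = 0"

definition F1 :: "real \<Rightarrow> real^3^3" where "F1 \<gamma> = Xm \<gamma> - Ym"
definition F2 :: "real \<Rightarrow> real^3^3" where "F2 \<gamma> = Xm \<gamma> ** Ym - Ym ** Xm \<gamma>"
definition F3 :: "real \<Rightarrow> real^3^3" where "F3 \<gamma> = Ym ** F2 \<gamma> - F2 \<gamma> ** Ym"

definition reduced :: "real \<Rightarrow> (real \<Rightarrow> real^3) \<Rightarrow> (real \<Rightarrow> real^3) \<Rightarrow> real \<Rightarrow> real \<times> real \<times> real" where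
  "reduced \<gamma> \<psi> p t =
     (inner (p t) (F1 \<gamma> *v \<psi> t), inner (p t) (F2 \<gamma> *v \<psi> t), inner (p t) (F3 \<gamma> *v \<psi> t))"

definition trajectory_with ::
  "real \<Rightarrow> (real \<Rightarrow> real^3^3) \<Rightarrow> real \<Rightarrow> (real \<Rightarrow> real^3) \<Rightarrow> real set \<Rightarrow> bool" where
  "trajectory_with \<gamma> A T \<psi> S \<longleftrightarrow>
     0 \<le> T \<and> finite S \<and>
     (\<forall>t\<in>{0..T}. A t \<in> {Xm \<gamma>, Ym}) \<and>
     (\<forall>t\<in>{0..T} - S. \<exists>e>0. \<forall>t'\<in>{0..T}. \<bar>t' - t\<bar> < e \<longrightarrow> A t' = A t) \<and>
     continuous_on {0..T} \<psi> \<and> \<psi> 0 = psi0 \<gamma> \<and>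
     (\<forall>t\<in>{0..T} - S. (\<psi> has_vector_derivative (A t *v \<psi> t)) (at t within {0..T}))"

definition trajectory :: "real \<Rightarrow> (real \<Rightarrow> real^3^3) \<Rightarrow> real \<Rightarrow> (real \<Rightarrow> real^3) \<Rightarrow> bool" where
  "trajectory \<gamma> A T \<psi> \<longleftrightarrow> (\<exists>S. trajectory_with \<gamma> A T \<psi> S)"

definition time_optimal :: "real \<Rightarrow> (real \<Rightarrow> real^3^3) \<Rightarrow> real \<Rightarrow> (real \<Rightarrow> real^3) \<Rightarrow> bool" where
  "time_optimal \<gamma> A T \<psi> \<longleftrightarrow>
     trajectory \<gamma> A T \<psi> \<and> in_Sigma (\<psi> T) \<and>
     (\<forall>A' T' \<psi>'. trajectory \<gamma> A' T' \<psi>' \<and> in_Sigma (\<psi>' T') \<longrightarrow> T \<le> T')"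

definition normal_extremal ::
  "real \<Rightarrow> (real \<Rightarrow> real^3^3) \<Rightarrow> real \<Rightarrow> (real \<Rightarrow> real^3) \<Rightarrow> (real \<Rightarrow> real^3) \<Rightarrow> bool" where
  "normal_extremal \<gamma> A T \<psi> p \<longleftrightarrow>
     (\<exists>S. trajectory_with \<gamma> A T \<psi> S \<and>
        continuous_on {0..T} p \<and> (\<exists>t\<in>{0..T}. p t \<noteq> 0) \<and>
        (\<forall>t\<in>{0..T} - S. (p has_vector_derivative (- (transpose (A t) *v p t))) (at t within {0..T}))) \<and>
     (AE t in lborel. t \<in> {0..T} \<longrightarrow>
        (\<forall>B\<in>{Xm \<gamma>, Ym}. inner (p t) (B *v \<psi> t) - 1 \<le> inner (p t) (A t *v \<psi> t) - 1))"

definition switching_time :: "(real \<Rightarrow> real^3^3) \<Rightarrow> real \<Rightarrow> real \<Rightarrow> bool" where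
  "switching_time A T t \<longleftrightarrow> t \<in> {0<..<T} \<and>
     \<not> (\<exists>e>0. \<exists>B. \<forall>t'. 0 < \<bar>t' - t\<bar> \<and> \<bar>t' - t\<bar> < e \<longrightarrow> A t' = B)"

definition regular ::
  "real \<Rightarrow> (real \<Rightarrow> real^3^3) \<Rightarrow> real \<Rightarrow> (real \<Rightarrow> real^3) \<Rightarrow> (real \<Rightarrow> real^3) \<Rightarrow> bool" where
  "regular \<gamma> A T \<psi> p \<longleftrightarrow>
     (\<forall>t\<in>{0..T}. fst (reduced \<gamma> \<psi> p t) = 0 \<longrightarrow>
        (\<exists>e>0. \<forall>t'\<in>{0..T}. 0 < \<bar>t' - t\<bar> \<and> \<bar>t' - t\<bar> < e \<longrightarrow> fst (reduced \<gamma> \<psi> p t') \<noteq> 0)) \<and>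
     (\<forall>t. switching_time A T t \<longrightarrow>
        fst (reduced \<gamma> \<psi> p t) = 0 \<and> fst (snd (reduced \<gamma> \<psi> p t)) \<noteq> 0)"

definition Y_solution ::
  "real \<Rightarrow> real^3 \<Rightarrow> real^3 \<Rightarrow> (real \<Rightarrow> real^3) \<Rightarrow> (real \<Rightarrow> real^3) \<Rightarrow> bool" where
  "Y_solution L \<psi>1 p1 q r \<longleftrightarrow> q 0 = \<psi>1 \<and> r 0 = p1 \<and>
     (\<forall>t\<in>{0..L}. (q has_vector_derivative (Ym *v q t)) (at t within {0..L}) \<and>
                  (r has_vector_derivative (- (transpose Ym *v r t))) (at t within {0..L}))"

definition Y_arc_s2s ::
  "real \<Rightarrow> real^3 \<Rightarrow> real^3 \<Rightarrow> real \<Rightarrow> real \<times> real \<times> real \<Rightarrow> bool" where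
  "Y_arc_s2s \<gamma> \<psi>1 p1 L d \<longleftrightarrow> 0 < L \<and>
     (\<exists>q r. Y_solution L \<psi>1 p1 q r) \<and>
     (\<forall>q r. Y_solution L \<psi>1 p1 q r \<longrightarrow>
        fst (reduced \<gamma> q r 0) = 0 \<and>
        (\<forall>t\<in>{0<..<L}. fst (reduced \<gamma> q r t) \<noteq> 0) \<and>
        reduced \<gamma> q r L = d)"

end

theory Submission
  imports Defs
begin


lemma alg3: fixes B F :: "real^3^3" and r q :: "real^3"
  shows "inner r (h *\<^sub>R (F *v (B *v q))) + inner (h *\<^sub>R (- (transpose B *v r))) (F *v q) = h * inner r ((F ** B - B ** F) *v q)"
  by (simp add: inner_vec_def matrix_vector_mult_def matrix_matrix_mult_def transpose_def sum_3 algebra_simps)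

lemma phi_deriv:
  fixes F B :: "real^3^3" and q r :: "real \<Rightarrow> real^3"
  assumes q: "(q has_vector_derivative (B *v q t)) (at t within S)"
    and r: "(r has_vector_derivative (- (transpose B *v r t))) (at t within S)"
  shows "((\<lambda>t. inner (r t) (F *v q t)) has_real_derivative inner (r t) ((F ** B - B ** F) *v q t)) (at t within S)"
proof -
  have q': "((\<lambda>t. F *v q t) has_vector_derivative (F *v (B *v q t))) (at t within S)"
    using bounded_linear.has_vector_derivative[OF matrix_vector_mul_bounded_linear q] .
  have "((\<lambda>t. inner (r t) (F *v q t)) has_derivative
     (\<lambda>h. inner (r t) (h *\<^sub>R (F *v (B *v q t))) + inner (h *\<^sub>R (- (transpose B *v r t))) (F *v q t))) (at t within S)"
    using has_derivative_inner[OF r[unfolded has_vector_derivative_def] q'[unfolded has_vector_derivative_def]] .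
  moreover have "(\<lambda>h. inner (r t) (h *\<^sub>R (F *v (B *v q t))) + inner (h *\<^sub>R (- (transpose B *v r t))) (F *v q t))
     = (\<lambda>h. h * inner (r t) ((F ** B - B ** F) *v q t))"
    by (rule ext, rule alg3)
  ultimately have "((\<lambda>t. inner (r t) (F *v q t)) has_derivative (\<lambda>h. h * inner (r t) ((F ** B - B ** F) *v q t))) (at t within S)" by simp
  then show ?thesis unfolding has_field_derivative_def mult_commute_abs .
qed



lemma sc1: "(cos g)^2 = 1 - (sin g)^2" for g :: real by (simp add: cos_squared_eq)

lemma matI: "(M::real^3^3) = N \<longleftrightarrow> (\<forall>i j. M$i$j = N$i$j)" by (simp add: vec_eq_iff)

lemmas mexp = matI forall_3 matrix_matrix_mult_def sum_3 Xm_def Ym_def F1_def F2_def F3_def Let_def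

lemma c11: "F1 g ** Xm g - Xm g ** F1 g = F2 g"
  by (simp add: mexp algebra_simps)
lemma c12: "F1 g ** Ym - Ym ** F1 g = F2 g"
  by (simp add: mexp algebra_simps)
lemma c22: "F2 g ** Ym - Ym ** F2 g = - F3 g"
  by (simp add: mexp algebra_simps)
lemma c32: "F3 g ** Ym - Ym ** F3 g = F2 g"
  by (simp add: mexp algebra_simps)
lemma c31: "F3 g ** Xm g - Xm g ** F3 g = (sin g)^2 *\<^sub>R F2 g"
  by (simp add: mexp algebra_simps power2_eq_square)
lemma e0: assumes "(x::real)^2 + y^2 = 1" shows "y*(y*(x*x)) + x*(x*(x*x)) = x*x"
proof -
  have "y*(y*(x*x)) + x*(x*(x*x)) = (x^2+y^2)*(x*x)" by (simp add: power2_eq_square algebra_simps)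
  thus ?thesis using assms by simp
qed

lemma c21: "F2 g ** Xm g - Xm g ** F2 g = - ((sin g)^2 *\<^sub>R F1 g)"
  using e0[OF sin_cos_squared_add[of g]] by (simp add: mexp algebra_simps power2_eq_square)



lemma const_on:
  fixes g :: "real \<Rightarrow> real"
  assumes "finite k" "continuous_on {u..v} g"
    "\<And>x. x \<in> {u..v} - k \<Longrightarrow> (g has_real_derivative 0) (at x within {u..v})" "x \<in> {u..v}"
  shows "g x = g u"
proof -
  have z: "(*) (0::real) = (\<lambda>h. 0)" by auto
  show ?thesis
    by (rule has_derivative_zero_unique_strong_interval[OF assms(1,2) refl])
       (use assms in \<open>auto simp: has_field_derivative_def z\<close>)
qed

lemma ode_X:
  fixes f1 f2 f3 :: "real \<Rightarrow> real"
  assumes s: "s > 0" and k: "finite k"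
    and c: "continuous_on {u..v} f1" "continuous_on {u..v} f2" "continuous_on {u..v} f3"
    and d1: "\<And>t. t \<in> {u..v} - k \<Longrightarrow> (f1 has_real_derivative f2 t) (at t within {u..v})"
    and d2: "\<And>t. t \<in> {u..v} - k \<Longrightarrow> (f2 has_real_derivative (- (s^2 * f1 t))) (at t within {u..v})"
    and d3: "\<And>t. t \<in> {u..v} - k \<Longrightarrow> (f3 has_real_derivative (s^2 * f2 t)) (at t within {u..v})"
    and v: "v = u + pi / s" and f1u: "f1 u = 0"
  shows "f1 v = 0 \<and> f2 v = - f2 u \<and> f3 v = f3 u"
proof -
  have uv: "u \<le> v" using v s by simp
  define g1 where "g1 t = f1 t * cos (s * (t - u)) - f2 t / s * sin (s * (t - u))" for t
  define g2 where "g2 t = f1 t * s * sin (s * (t - u)) + f2 t * cos (s * (t - u))" for t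
  define g3 where "g3 t = f3 t - s^2 * f1 t" for t
  have cg1: "continuous_on {u..v} g1" unfolding g1_def by (intro continuous_intros c) (use s in simp)
  have cg2: "continuous_on {u..v} g2" unfolding g2_def by (intro continuous_intros c) 
  have cg3: "continuous_on {u..v} g3" unfolding g3_def by (intro continuous_intros c) 
  have dg1: "(g1 has_real_derivative 0) (at t within {u..v})" if "t \<in> {u..v} - k" for t
    unfolding g1_def
    using s by (auto intro!: derivative_eq_intros d1[OF that] d2[OF that] simp: power2_eq_square field_simps)
  have dg2: "(g2 has_real_derivative 0) (at t within {u..v})" if "t \<in> {u..v} - k" for t
    unfolding g2_def
    using s by (auto intro!: derivative_eq_intros d1[OF that] d2[OF that] simp: power2_eq_square field_simps)
  have dg3: "(g3 has_real_derivative 0) (at t within {u..v})" if "t \<in> {u..v} - k" for t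
    unfolding g3_def
    by (auto intro!: derivative_eq_intros d1[OF that] d3[OF that])
  have vv: "v \<in> {u..v}" using uv by simp
  have e1: "g1 v = g1 u" by (rule const_on[OF k cg1 dg1 vv])
  have e2: "g2 v = g2 u" by (rule const_on[OF k cg2 dg2 vv])
  have e3: "g3 v = g3 u" by (rule const_on[OF k cg3 dg3 vv])
  have sv: "s * (v - u) = pi" using v s by simp
  from e1 e2 e3 show ?thesis using f1u by (simp add: g1_def g2_def g3_def sv)
qed

lemma rotA: assumes "(y::real)^2 + x^2 = 1"
  shows "a = (a * x + b * y) * x - (- a * y + b * x) * y"
proof -
  have "(a * x + b * y) * x - (- a * y + b * x) * y = a * (y^2 + x^2)" by (simp add: power2_eq_square algebra_simps)
  thus ?thesis using assms by simp
qed

lemma rotB: assumes "(y::real)^2 + x^2 = 1"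
  shows "b = (a * x + b * y) * y + (- a * y + b * x) * x"
proof -
  have "(a * x + b * y) * y + (- a * y + b * x) * x = b * (y^2 + x^2)" by (simp add: power2_eq_square algebra_simps)
  thus ?thesis using assms by simp
qed

lemma ode_Y:
  fixes f1 f2 f3 :: "real \<Rightarrow> real"
  assumes k: "finite k"
    and c: "continuous_on {u..v} f1" "continuous_on {u..v} f2" "continuous_on {u..v} f3"
    and d1: "\<And>t. t \<in> {u..v} - k \<Longrightarrow> (f1 has_real_derivative f2 t) (at t within {u..v})"
    and d2: "\<And>t. t \<in> {u..v} - k \<Longrightarrow> (f2 has_real_derivative (- f3 t)) (at t within {u..v})"
    and d3: "\<And>t. t \<in> {u..v} - k \<Longrightarrow> (f3 has_real_derivative f2 t) (at t within {u..v})"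
    and t: "t \<in> {u..v}"
  shows "f2 t = f2 u * cos (t - u) - f3 u * sin (t - u) \<and> f3 t = f2 u * sin (t - u) + f3 u * cos (t - u)
     \<and> f1 t = f3 t - f3 u + f1 u"
proof -
  define g1 where "g1 t = f3 t - f1 t" for t
  define g2 where "g2 t = f2 t * cos (t - u) + f3 t * sin (t - u)" for t
  define g3 where "g3 t = - f2 t * sin (t - u) + f3 t * cos (t - u)" for t
  have cg1: "continuous_on {u..v} g1" unfolding g1_def by (intro continuous_intros c) 
  have cg2: "continuous_on {u..v} g2" unfolding g2_def by (intro continuous_intros c) 
  have cg3: "continuous_on {u..v} g3" unfolding g3_def by (intro continuous_intros c) 
  have dg1: "(g1 has_real_derivative 0) (at t within {u..v})" if "t \<in> {u..v} - k" for t
    unfolding g1_def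
    by (auto intro!: derivative_eq_intros d1[OF that] d3[OF that])
  have dg2: "(g2 has_real_derivative 0) (at t within {u..v})" if "t \<in> {u..v} - k" for t
    unfolding g2_def
    by (auto intro!: derivative_eq_intros d2[OF that] d3[OF that] simp: algebra_simps)
  have dg3: "(g3 has_real_derivative 0) (at t within {u..v})" if "t \<in> {u..v} - k" for t
    unfolding g3_def
    by (auto intro!: derivative_eq_intros d2[OF that] d3[OF that] simp: algebra_simps)
  have e1: "g1 t = g1 u" by (rule const_on[OF k cg1 dg1 t])
  have e2: "g2 t = g2 u" by (rule const_on[OF k cg2 dg2 t])
  have e3: "g3 t = g3 u" by (rule const_on[OF k cg3 dg3 t])
  have A: "f2 t = g2 t * cos (t - u) - g3 t * sin (t - u)"
    unfolding g2_def g3_def by (rule rotA[OF sin_cos_squared_add[of "t-u"]])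
  have B: "f3 t = g2 t * sin (t - u) + g3 t * cos (t - u)"
    unfolding g2_def g3_def by (rule rotB[OF sin_cos_squared_add[of "t-u"]])
  have g2u: "g2 u = f2 u" and g3u: "g3 u = f3 u" by (simp_all add: g2_def g3_def)
  have A': "f2 t = f2 u * cos (t - u) - f3 u * sin (t - u)" using A e2 e3 g2u g3u by simp
  have B': "f3 t = f2 u * sin (t - u) + f3 u * cos (t - u)" using B e2 e3 g2u g3u by simp
  have C': "f1 t = f3 t - f3 u + f1 u" using e1 unfolding g1_def by simp
  show ?thesis using A' B' C' by blast
qed



lemma inner_scale_mat: "inner r ((c *\<^sub>R M) *v x) = c * inner r ((M::real^3^3) *v x)"
  by (simp add: inner_vec_def matrix_vector_mult_def sum_3 algebra_simps)
lemma inner_neg_mat: "inner r ((- M) *v x) = - inner r ((M::real^3^3) *v x)"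
  by (simp add: inner_vec_def matrix_vector_mult_def sum_3 algebra_simps)

lemma cont_ph: "continuous_on S q \<Longrightarrow> continuous_on S r \<Longrightarrow> continuous_on S (\<lambda>t. inner (r t) ((F::real^3^3) *v q t))"
  by (intro continuous_intros bounded_linear.continuous_on[OF matrix_vector_mul_bounded_linear]) auto

lemma arc_X:
  fixes q r :: "real \<Rightarrow> real^3"
  assumes g: "0 < g" "g < pi/2" and k: "finite k"
    and cq: "continuous_on {u..v} q" and cr: "continuous_on {u..v} r"
    and dq: "\<And>t. t \<in> {u..v} - k \<Longrightarrow> (q has_vector_derivative (Xm g *v q t)) (at t within {u..v})"
    and dr: "\<And>t. t \<in> {u..v} - k \<Longrightarrow> (r has_vector_derivative (- (transpose (Xm g) *v r t))) (at t within {u..v})"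
    and v: "v = u + pi / sin g" and st: "reduced g q r u = (0, a, b)"
  shows "reduced g q r v = (0, - a, b)"
proof -
  define f1 where "f1 t = inner (r t) (F1 g *v q t)" for t
  define f2 where "f2 t = inner (r t) (F2 g *v q t)" for t
  define f3 where "f3 t = inner (r t) (F3 g *v q t)" for t
  have s: "sin g > 0" using g by (intro sin_gt_zero) auto
  have "f1 v = 0 \<and> f2 v = - f2 u \<and> f3 v = f3 u"
  proof (rule ode_X[OF s k])
    show "continuous_on {u..v} f1" "continuous_on {u..v} f2" "continuous_on {u..v} f3"
      unfolding f1_def f2_def f3_def using cont_ph[OF cq cr] by auto
    fix t assume t: "t \<in> {u..v} - k"
    show "(f1 has_real_derivative f2 t) (at t within {u..v})"
      using phi_deriv[OF dq[OF t] dr[OF t], of "F1 g"] unfolding f1_def f2_def c11 .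
    show "(f2 has_real_derivative - ((sin g)^2 * f1 t)) (at t within {u..v})"
      using phi_deriv[OF dq[OF t] dr[OF t], of "F2 g"] unfolding f1_def f2_def c21 inner_neg_mat inner_scale_mat .
    show "(f3 has_real_derivative ((sin g)^2 * f2 t)) (at t within {u..v})"
      using phi_deriv[OF dq[OF t] dr[OF t], of "F3 g"] unfolding f3_def f2_def c31 inner_scale_mat .
  next
    show "v = u + pi / sin g" by (rule v)
    show "f1 u = 0" using st by (simp add: reduced_def f1_def)
  qed
  thus ?thesis using st by (simp add: reduced_def f1_def f2_def f3_def)
qed

lemma arc_Y:
  fixes q r :: "real \<Rightarrow> real^3"
  assumes k: "finite k"
    and cq: "continuous_on {u..v} q" and cr: "continuous_on {u..v} r"
    and dq: "\<And>t. t \<in> {u..v} - k \<Longrightarrow> (q has_vector_derivative (Ym *v q t)) (at t within {u..v})"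
    and dr: "\<And>t. t \<in> {u..v} - k \<Longrightarrow> (r has_vector_derivative (- (transpose Ym *v r t))) (at t within {u..v})"
    and st: "reduced g q r u = (0, a, b)" and t: "t \<in> {u..v}"
  shows "reduced g q r t = (a * sin (t - u) + b * cos (t - u) - b,
            a * cos (t - u) - b * sin (t - u), a * sin (t - u) + b * cos (t - u))"
proof -
  define f1 where "f1 t = inner (r t) (F1 g *v q t)" for t
  define f2 where "f2 t = inner (r t) (F2 g *v q t)" for t
  define f3 where "f3 t = inner (r t) (F3 g *v q t)" for t
  have "f2 t = f2 u * cos (t - u) - f3 u * sin (t - u) \<and> f3 t = f2 u * sin (t - u) + f3 u * cos (t - u)
     \<and> f1 t = f3 t - f3 u + f1 u"
  proof (rule ode_Y[OF k])
    show "continuous_on {u..v} f1" "continuous_on {u..v} f2" "continuous_on {u..v} f3"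
      unfolding f1_def f2_def f3_def using cont_ph[OF cq cr] by auto
    fix t assume t: "t \<in> {u..v} - k"
    show "(f1 has_real_derivative f2 t) (at t within {u..v})"
      using phi_deriv[OF dq[OF t] dr[OF t], of "F1 g"] unfolding f1_def f2_def c12 .
    show "(f2 has_real_derivative - f3 t) (at t within {u..v})"
      using phi_deriv[OF dq[OF t] dr[OF t], of "F2 g"] unfolding f3_def f2_def c22 inner_neg_mat .
    show "(f3 has_real_derivative f2 t) (at t within {u..v})"
      using phi_deriv[OF dq[OF t] dr[OF t], of "F3 g"] unfolding f3_def f2_def c32 .
  next
    show "t \<in> {u..v}" by (rule t)
  qed
  moreover have "f1 u = 0" "f2 u = a" "f3 u = b" using st by (simp_all add: reduced_def f1_def f2_def f3_def)
  ultimately show ?thesis by (simp add: reduced_def f1_def f2_def f3_def)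
qed



lemma sub_arc:
  fixes \<psi> p :: "real \<Rightarrow> real^3"
  assumes "finite S" "continuous_on {0..T} \<psi>" "continuous_on {0..T} p"
    and d\<psi>: "\<forall>t\<in>{0..T}-S. (\<psi> has_vector_derivative (A t *v \<psi> t)) (at t within {0..T})"
    and dp: "\<forall>t\<in>{0..T}-S. (p has_vector_derivative (- (transpose (A t) *v p t))) (at t within {0..T})"
    and uv: "0 \<le> u" "v \<le> T" and AB: "\<forall>t\<in>{u<..<v}. A t = B"
  shows "finite (S \<union> {u,v})" "continuous_on {u..v} \<psi>" "continuous_on {u..v} p"
    "\<And>t. t \<in> {u..v} - (S \<union> {u,v}) \<Longrightarrow> (\<psi> has_vector_derivative (B *v \<psi> t)) (at t within {u..v})"
    "\<And>t. t \<in> {u..v} - (S \<union> {u,v}) \<Longrightarrow> (p has_vector_derivative (- (transpose B *v p t))) (at t within {u..v})"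
proof -
  have sub: "{u..v} \<subseteq> {0..T}" using uv by auto
  show "finite (S \<union> {u,v})" using assms(1) by simp
  show "continuous_on {u..v} \<psi>" "continuous_on {u..v} p" using assms(2,3) continuous_on_subset sub by blast+
  fix t assume t: "t \<in> {u..v} - (S \<union> {u,v})"
  then have tT: "t \<in> {0..T} - S" and At: "A t = B" using sub AB by auto
  show "(\<psi> has_vector_derivative (B *v \<psi> t)) (at t within {u..v})"
    using has_vector_derivative_within_subset[OF d\<psi>[rule_format, OF tT] sub] At by simp
  show "(p has_vector_derivative (- (transpose B *v p t))) (at t within {u..v})"
    using has_vector_derivative_within_subset[OF dp[rule_format, OF tT] sub] At by simp
qed

lemma sw_mid:
  assumes "u < t" "t < w" "\<forall>x\<in>{u<..<t}. A x = B1" "\<forall>x\<in>{t<..<w}. A x = B2" "B1 \<noteq> B2" "0 < t" "t < T"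
  shows "switching_time A T t"
  unfolding switching_time_def
proof (intro conjI notI)
  show "t \<in> {0<..<T}" using assms by auto
  assume "\<exists>e>0. \<exists>B. \<forall>t'. 0 < \<bar>t' - t\<bar> \<and> \<bar>t' - t\<bar> < e \<longrightarrow> A t' = B"
  then obtain e B where e: "e > 0" and h: "\<And>t'. 0 < \<bar>t' - t\<bar> \<and> \<bar>t' - t\<bar> < e \<Longrightarrow> A t' = B" by blast
  define d where "d = min e (min (t - u) (w - t)) / 2"
  have d: "0 < d" "d < e" "d < t - u" "d < w - t" using e assms unfolding d_def by auto
  have "A (t - d) = B" by (rule h) (use d in auto)
  moreover have "A (t + d) = B" by (rule h) (use d in auto)
  moreover have "A (t - d) = B1" using assms(3) d by auto
  moreover have "A (t + d) = B2" using assms(4) d by auto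
  ultimately show False using assms(5) by simp
qed

lemma XneY: "0 < g \<Longrightarrow> g < pi/2 \<Longrightarrow> Xm g \<noteq> Ym"
proof
  assume g: "0 < g" "g < pi/2" and e: "Xm g = Ym"
  have "sin g > 0" using g by (intro sin_gt_zero) auto
  moreover have "cos g > 0" using g by (intro cos_gt_zero) auto
  moreover have "Xm g $ 1 $ 3 = Ym $ 1 $ 3" using e by simp
  ultimately show False by (simp add: Xm_def Ym_def Let_def)
qed

lemma alg_sw:
  fixes a b x y :: real
  assumes "y^2 + x^2 = 1" "x < 1" "a * y + b * x - b = 0"
  shows "a * x - b * y = - a"
proof -
  have "(a * x - b * y + a) * (1 - x) = y * (a * y + b * x - b) + a * (1 - (y^2 + x^2))"
    by (simp add: algebra_simps power2_eq_square)
  also have "\<dots> = 0" using assms by simp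
  finally show ?thesis using assms(2) by simp
qed

lemma cos_lt1: "0 < l \<Longrightarrow> l < 2*pi \<Longrightarrow> cos l < (1::real)"
proof -
  assume l: "0 < l" "l < 2*pi"
  have "sin (l/2) > 0" using l by (intro sin_gt_zero) auto
  moreover have "cos l = 1 - 2 * (sin (l/2))^2" using cos_double_sin[of "l/2"] by simp
  ultimately show ?thesis by (simp add: power2_eq_square)
qed



lemma Ym_transp: "- (transpose Ym *v y) = Ym *v (y::real^3)"
  by (simp add: vec_eq_iff forall_3 matrix_vector_mult_def sum_3 Ym_def transpose_def)

lemma Y_flow: "\<exists>q. q 0 = (x0::real^3) \<and> (\<forall>t. (q has_vector_derivative (Ym *v q t)) (at t))"
proof -
  define u :: "real^3" where "u = vector [x0$1, x0$2, 0]"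
  define v :: "real^3" where "v = vector [x0$2, - (x0$1), 0]"
  define w :: "real^3" where "w = vector [0, 0, x0$3]"
  define q where "q t = cos t *\<^sub>R u + sin t *\<^sub>R v + w" for t
  have "q 0 = x0" by (simp add: q_def u_def v_def w_def vec_eq_iff forall_3)
  moreover have "(q has_vector_derivative (Ym *v q t)) (at t)" for t
  proof -
    have "(q has_vector_derivative (- sin t *\<^sub>R u + cos t *\<^sub>R v)) (at t)"
      unfolding q_def by (auto intro!: derivative_eq_intros)
    moreover have "- sin t *\<^sub>R u + cos t *\<^sub>R v = Ym *v q t"
      by (simp add: q_def u_def v_def w_def vec_eq_iff forall_3 matrix_vector_mult_def sum_3 Ym_def)
    ultimately show ?thesis by simp
  qed
  ultimately show ?thesis by blast
qed

lemma tri1: assumes "s^2 + c^2 = (1::real)" shows "K * s * (2 * s * c) + K * c * (c^2 - s^2) - K * c = 0"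
proof -
  have "K * s * (2 * s * c) + K * c * (c^2 - s^2) - K * c = K * c * (s^2 + c^2 - 1)" by (simp add: algebra_simps power2_eq_square)
  thus ?thesis using assms by simp
qed

lemma tri2: assumes "s^2 + c^2 = (1::real)" shows "K * s * (c^2 - s^2) - K * c * (2 * s * c) = - (K * s)"
proof -
  have "K * s * (c^2 - s^2) - K * c * (2 * s * c) = - (K * s * (s^2 + c^2))" by (simp add: algebra_simps power2_eq_square)
  thus ?thesis using assms by simp
qed

lemma Yarc_s2s:
  fixes g a b :: real and \<psi>1 p1 :: "real^3"
  assumes a: "a \<noteq> 0" and st: "reduced g (\<lambda>_. \<psi>1) (\<lambda>_. p1) 0 = (0, a, b)"
  shows "\<exists>L. 0 < L \<and> L < 2 * pi \<and> Y_arc_s2s g \<psi>1 p1 L (0, - a, b)"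
proof -
  define th where "th = pi/2 - arctan (b/a)"
  define R where "R = sqrt (1 + (b/a)^2)"
  have R: "R > 0" unfolding R_def by (simp add: add_pos_nonneg)
  have th0: "0 < th" "th < pi" unfolding th_def using arctan_bounded[of "b/a"] by auto
  have sth: "sin th = 1 / R" unfolding th_def R_def by (simp add: sin_diff cos_arctan)
  have cth: "cos th = (b/a) / R" unfolding th_def R_def by (simp add: cos_diff sin_arctan)
  define K where "K = a * R"
  have aK: "a = K * sin th" unfolding K_def sth using R by simp
  have bK: "b = K * cos th" unfolding K_def cth using R a by simp
  have K0: "K \<noteq> 0" unfolding K_def using a R by simp
  define L where "L = 2 * th"
  have L: "0 < L" "L < 2 * pi" unfolding L_def using th0 by auto
  have fml: "reduced g q r t = (0, a, b)" if "Y_solution L \<psi>1 p1 q r" "t = 0" for q r t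
    using that st by (simp add: Y_solution_def reduced_def)
  have expl: "reduced g q r t = (a * sin t + b * cos t - b, a * cos t - b * sin t, a * sin t + b * cos t)"
    if Y: "Y_solution L \<psi>1 p1 q r" and t: "t \<in> {0..L}" for q r t
  proof -
    have dq: "\<And>t. t \<in> {0..L} \<Longrightarrow> (q has_vector_derivative (Ym *v q t)) (at t within {0..L})"
      and dr: "\<And>t. t \<in> {0..L} \<Longrightarrow> (r has_vector_derivative (- (transpose Ym *v r t))) (at t within {0..L})"
      using Y unfolding Y_solution_def by auto
    have cq: "continuous_on {0..L} q"
      using dq has_vector_derivative_continuous continuous_on_eq_continuous_within by blast
    have cr: "continuous_on {0..L} r"
      using dr has_vector_derivative_continuous continuous_on_eq_continuous_within by blast
    have "reduced g q r t = (a * sin (t - 0) + b * cos (t - 0) - b,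
            a * cos (t - 0) - b * sin (t - 0), a * sin (t - 0) + b * cos (t - 0))"
      by (rule arc_Y[where k="{}" and u=0 and v=L]) (use dq dr cq cr fml[OF Y refl] t in auto)
    thus ?thesis by simp
  qed
  have Yarc: "Y_arc_s2s g \<psi>1 p1 L (0, - a, b)"
    unfolding Y_arc_s2s_def
  proof (intro conjI allI impI ballI)
    show "0 < L" by (rule L(1))
    obtain q where q: "q 0 = \<psi>1" "\<forall>t. (q has_vector_derivative (Ym *v q t)) (at t)" using Y_flow by blast
    obtain r where r: "r 0 = p1" "\<forall>t. (r has_vector_derivative (Ym *v r t)) (at t)" using Y_flow by blast
    have "Y_solution L \<psi>1 p1 q r"
      unfolding Y_solution_def Ym_transp using q r has_vector_derivative_at_within by blast
    thus "\<exists>q r. Y_solution L \<psi>1 p1 q r" by blast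
  next
    fix q r assume Y: "Y_solution L \<psi>1 p1 q r"
    show "fst (reduced g q r 0) = 0" using fml[OF Y refl] by simp
  next
    fix q r t assume Y: "Y_solution L \<psi>1 p1 q r" and t: "t \<in> {0<..<L}"
    have e: "a * sin t + b * cos t - b = K * (cos (t - th) - cos th)"
      unfolding aK bK by (simp add: cos_diff algebra_simps)
    have "cos th < cos \<bar>t - th\<bar>"
      using t th0 unfolding L_def by (intro cos_monotone_0_pi) auto
    hence "cos (t - th) - cos th \<noteq> 0" by simp
    thus "fst (reduced g q r t) \<noteq> 0" using expl[OF Y] t e K0 by auto
  next
    fix q r assume Y: "Y_solution L \<psi>1 p1 q r"
    have sL: "sin L = 2 * sin th * cos th" unfolding L_def by (rule sin_double)
    have cL: "cos L = (cos th)^2 - (sin th)^2" unfolding L_def by (rule cos_double)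
    have e1: "a * sin L + b * cos L - b = 0"
      unfolding aK bK sL cL by (rule tri1[OF sin_cos_squared_add])
    have e2: "a * cos L - b * sin L = - a"
      unfolding aK bK sL cL by (rule tri2[OF sin_cos_squared_add])
    have e3: "a * sin L + b * cos L = b" using e1 by simp
    show "reduced g q r L = (0, - a, b)" using expl[OF Y, of L] L e1 e2 e3 by simp
  qed
  show ?thesis using L Yarc by blast
qed



lemma e1g: assumes "(x::real)^2 + y^2 = 1" shows "y * (y * (x * z)) + x * (x * (x * z)) = x * z"
proof -
  have "y * (y * (x * z)) + x * (x * (x * z)) = (x^2 + y^2) * (x * z)" by (simp add: power2_eq_square algebra_simps)
  thus ?thesis using assms by simp
qed

lemma X_fast:
  assumes g: "0 < g" "g < pi/2"
  shows "trajectory g (\<lambda>_. Xm g) (pi / (2 * sin g)) (\<lambda>t. cos (sin g * t) *\<^sub>R psi0 g + sin (sin g * t) *\<^sub>R axis 1 1)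
     \<and> in_Sigma ((\<lambda>t. cos (sin g * t) *\<^sub>R psi0 g + sin (sin g * t) *\<^sub>R axis 1 1) (pi / (2 * sin g)))"
proof -
  have s: "sin g > 0" using g by (intro sin_gt_zero) auto
  define T' where "T' = pi / (2 * sin g)"
  define q where "q t = cos (sin g * t) *\<^sub>R psi0 g + sin (sin g * t) *\<^sub>R (axis 1 1 :: real^3)" for t
  have dq: "(q has_vector_derivative (Xm g *v q t)) (at t)" for t
  proof -
    have "(q has_vector_derivative (- (sin (sin g * t) * sin g) *\<^sub>R psi0 g + (cos (sin g * t) * sin g) *\<^sub>R axis 1 1)) (at t)"
      unfolding q_def by (auto intro!: derivative_eq_intros simp: algebra_simps)
    moreover have "- (sin (sin g * t) * sin g) *\<^sub>R psi0 g + (cos (sin g * t) * sin g) *\<^sub>R (axis 1 1 :: real^3) = Xm g *v q t"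
    proof -
      have e: "cos g * (cos g * (sin g * cos (t * sin g))) + sin g * (sin g * (sin g * cos (t * sin g))) = sin g * cos (t * sin g)"
        by (rule e1g[OF sin_cos_squared_add])
      show ?thesis
        by (simp add: q_def vec_eq_iff forall_3 matrix_vector_mult_def sum_3 Xm_def psi0_def axis_def Let_def
            power2_eq_square algebra_simps e)
    qed
    ultimately show ?thesis by simp
  qed
  have tw: "trajectory_with g (\<lambda>_. Xm g) T' q {}"
    unfolding trajectory_with_def
  proof (intro conjI ballI)
    show "0 \<le> T'" unfolding T'_def using s by simp
    show "finite {}" by simp
    fix t show "Xm g \<in> {Xm g, Ym}" by simp
  next
    fix t show "\<exists>e>0. \<forall>t'\<in>{0..T'}. \<bar>t' - t\<bar> < e \<longrightarrow> Xm g = Xm g" using zero_less_one by blast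
  next
    show "continuous_on {0..T'} q"
      using dq has_vector_derivative_continuous continuous_at_imp_continuous_on by blast
    show "q 0 = psi0 g" by (simp add: q_def)
    fix t show "(q has_vector_derivative (Xm g *v q t)) (at t within {0..T'})"
      using dq has_vector_derivative_at_within by blast
  qed
  have "in_Sigma (q T')"
  proof -
    have "sin g * T' = pi / 2" unfolding T'_def using s by simp
    hence c0: "cos (sin g * T') = 0" and s1: "sin (sin g * T') = 1" by (simp_all only: cos_pi_half sin_pi_half)
    show ?thesis unfolding in_Sigma_def q_def c0 s1 by (simp add: inner_vec_def sum_3 axis_def psi0_def)
  qed
  thus ?thesis using tw unfolding trajectory_def q_def T'_def by blast
qed



theorem mainTheorem12:
  fixes \<gamma> T l t0 t1 t2 t3 a b :: real
    and A :: "real \<Rightarrow> real^3^3" and \<psi> p :: "real \<Rightarrow> real^3"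
  assumes gamma: "0 < \<gamma>" "\<gamma> < pi / 2"
    and ext: "normal_extremal \<gamma> A T \<psi> p"
    and reg: "regular \<gamma> A T \<psi> p"
    and ell: "0 < l" "l < 2 * pi"
    and times: "t1 = t0 + pi / sin \<gamma>" "t2 = t1 + l" "t3 = t2 + pi / sin \<gamma>"
    and arcX1: "\<forall>t\<in>{t0<..<t1}. A t = Xm \<gamma>"
    and arcY: "\<forall>t\<in>{t1<..<t2}. A t = Ym"
    and arcX2: "\<forall>t\<in>{t2<..<t3}. A t = Xm \<gamma>"
    and sw: "switching_time A T t0" "switching_time A T t3"
    and data: "reduced \<gamma> \<psi> p t0 = (0, a, b)" "a \<noteq> 0"
  shows "reduced \<gamma> \<psi> p t3 = (0, - a, b)
    \<and> (\<exists>L. 0 < L \<and> L < 2 * pi \<and> Y_arc_s2s \<gamma> (\<psi> t0) (p t0) L (0, - a, b) \<and> L < t3 - t0)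
    \<and> \<not> time_optimal \<gamma> A T \<psi>"
proof -
  have s: "sin \<gamma> > 0" using gamma by (intro sin_gt_zero) auto
  have s1: "sin \<gamma> \<le> 1" by simp
  have ps: "pi / sin \<gamma> > 0" using s by simp
  have ps2: "pi / sin \<gamma> \<ge> pi"
    using s s1 by (simp add: field_simps)
  from ext obtain S where tw: "trajectory_with \<gamma> A T \<psi> S" and cp: "continuous_on {0..T} p"
    and dp: "\<forall>t\<in>{0..T} - S. (p has_vector_derivative (- (transpose (A t) *v p t))) (at t within {0..T})"
    unfolding normal_extremal_def by blast
  from tw have fS: "finite S" and c\<psi>: "continuous_on {0..T} \<psi>"
    and d\<psi>: "\<forall>t\<in>{0..T} - S. (\<psi> has_vector_derivative (A t *v \<psi> t)) (at t within {0..T})"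
    unfolding trajectory_with_def by blast+
  have t0: "0 < t0" "t0 < T" using sw(1) unfolding switching_time_def by auto
  have t3: "0 < t3" "t3 < T" using sw(2) unfolding switching_time_def by auto
  have ord: "t0 < t1" "t1 < t2" "t2 < t3" using times ps ell by auto
  note sa = sub_arc[OF fS c\<psi> cp d\<psi> dp]
  have X1: "reduced \<gamma> \<psi> p t1 = (0, - a, b)"
  proof -
    have "0 \<le> t0" "t1 \<le> T" using t0 t3 ord by auto
    note h = sa[OF this arcX1]
    show ?thesis by (rule arc_X[OF gamma h(1-5) times(1) data(1)])
  qed
  have Y1: "reduced \<gamma> \<psi> p t2 = (- a * sin (t2 - t1) + b * cos (t2 - t1) - b,
            - a * cos (t2 - t1) - b * sin (t2 - t1), - a * sin (t2 - t1) + b * cos (t2 - t1))"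
  proof -
    have "0 \<le> t1" "t2 \<le> T" using t0 t3 ord by auto
    note h = sa[OF this arcY]
    show ?thesis by (rule arc_Y[OF h(1-5) X1]) (use ord in auto)
  qed
  have swt2: "switching_time A T t2"
    by (rule sw_mid[OF ord(2) ord(3) arcY arcX2]) (use XneY[OF gamma] ord t0 t3 in auto)
  hence "fst (reduced \<gamma> \<psi> p t2) = 0" using reg unfolding regular_def by blast
  hence z: "- a * sin l + b * cos l - b = 0" using Y1 times by simp
  have "- a * cos l - b * sin l = - (- a)"
    by (rule alg_sw[OF sin_cos_squared_add cos_lt1[OF ell] z])
  hence Y2: "reduced \<gamma> \<psi> p t2 = (0, a, b)" using Y1 z times by simp
  have X2: "reduced \<gamma> \<psi> p t3 = (0, - a, b)"
  proof -
    have "0 \<le> t2" "t3 \<le> T" using t0 t3 ord by auto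
    note h = sa[OF this arcX2]
    show ?thesis by (rule arc_X[OF gamma h(1-5) times(3) Y2])
  qed
  have st0: "reduced \<gamma> (\<lambda>_. \<psi> t0) (\<lambda>_. p t0) 0 = (0, a, b)"
    using data(1) by (simp add: reduced_def)
  obtain L where L: "0 < L" "L < 2 * pi" "Y_arc_s2s \<gamma> (\<psi> t0) (p t0) L (0, - a, b)"
    using Yarc_s2s[OF data(2) st0] by blast
  have "L < t3 - t0" using L(2) times ps2 ell by auto
  with L have P2: "\<exists>L. 0 < L \<and> L < 2 * pi \<and> Y_arc_s2s \<gamma> (\<psi> t0) (p t0) L (0, - a, b) \<and> L < t3 - t0" by blast
  have P3: "\<not> time_optimal \<gamma> A T \<psi>"
  proof
    assume "time_optimal \<gamma> A T \<psi>"
    hence "T \<le> pi / (2 * sin \<gamma>)" using X_fast[OF gamma] unfolding time_optimal_def by blast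
    moreover have "pi / (2 * sin \<gamma>) < pi / sin \<gamma>" using s by (simp add: field_simps)
    moreover have "pi / sin \<gamma> < T" using t0 t3 times ell ps by auto
    ultimately show False by simp
  qed
  show ?thesis using X2 P2 P3 by blast
qed

end
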